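(* Let $e\in\mathbb{R}^n$ satisfy $\|e\|=\sqrt n$, and let $0<\beta\le\alpha<\sqrt n$. Assume $\bar s$ lies in the interior of $K_e(\beta)^*$, and assume $\bar x$ solves \[ \min_x\ \bar s^Tx\quad\text{s.t.}\quad x\in e+L,\ x\in K_e(\alpha), \] where $L$ is a linear subspace with $e\notin L$ and $\bar s\notin L^\perp$. Then there exists $\bar s'\in(\bar s+L^\perp)\cap K_e(\alpha)^*$ satisfying $e^T(\bar s-\bar s')\ge\mathcal{C}_1\mathcal{C}_2\|\bar s\|$, where \[ \mathcal{C}_1:=\left(\frac{(n-\alpha^2)\|\bar x\|^2\big(1-(\beta/\alpha)^2\big)}{n-\alpha^2+(\|\bar x\|-\alpha)^2\big(1-(\beta/\alpha)^2\big)}\right)^{1/2},\qquad \mathcal{C}_2:=\frac1n\Big(\alpha\sqrt{n-\beta^2}-\beta\sqrt{n-\alpha^2}\Big). \]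
   Context: $\mathbb{R}^n$ carries the dot product and Euclidean norm $\|\cdot\|$. For $0<\gamma<\sqrt n$, $K_e(\gamma):=\{x:e^Tx\ge\gamma\|x\|\}$ and $K_e(\gamma)^*:=\{s:x^Ts\ge0\ \forall x\in K_e(\gamma)\}$ (which equals $\{s:e^Ts\ge\sqrt{n-\gamma^2}\|s\|\}$). $e+L=\{e+v:v\in L\}$, and $L^\perp$ is the orthogonal complement of $L$. *)

theory Defs
  imports "HOL-Analysis.Analysis"
begin

definition cone_K :: "'a::real_inner \<Rightarrow> real \<Rightarrow> 'a set" where
  "cone_K e \<gamma> = {x. e \<bullet> x \<ge> \<gamma> * norm x}"

definition dual_cone :: "'a::real_inner set \<Rightarrow> 'a set" where
  "dual_cone K = {s. \<forall>x\<in>K. x \<bullet> s \<ge> 0}"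

definition orth_compl :: "'a::real_inner set \<Rightarrow> 'a set" where
  "orth_compl L = {s. \<forall>v\<in>L. v \<bullet> s = 0}"

end

theory Submission
  imports Defs
begin


lemma dir_lemma:
  fixes e x w :: "'a::real_inner" and \<alpha> :: real
  assumes a: "\<alpha> > 0" and N: "norm x > 0" and bd: "e \<bullet> x = \<alpha> * norm x"
    and q: "(norm x *\<^sub>R e - \<alpha> *\<^sub>R x) \<bullet> w > 0"
  shows "\<exists>t>0. x + t *\<^sub>R w \<in> cone_K e \<alpha>"
proof -
  define N where "N = norm x"
  define q where "q = N * (e \<bullet> w) - \<alpha> * (x \<bullet> w)"
  have qpos: "q > 0" using q unfolding q_def N_def by (simp add: inner_diff_left)
  define t where "t = min (q/(\<alpha>*(norm w)\<^sup>2+1)) (\<alpha>*N/(\<bar>e \<bullet> w\<bar>+1))"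
  have d1: "\<alpha>*(norm w)\<^sup>2+1 > 0" using a by (simp add: add_nonneg_pos)
  have d2: "\<bar>e \<bullet> w\<bar>+1 > 0" by simp
  have Npos: "N > 0" using N N_def by simp
  have tpos: "t > 0" unfolding t_def using qpos d1 d2 a Npos by simp
  have "t \<le> q/(\<alpha>*(norm w)\<^sup>2+1)" unfolding t_def by simp
  hence "t*(\<alpha>*(norm w)\<^sup>2+1) \<le> q" using d1 by (simp add: le_divide_eq)
  hence t1: "t*(\<alpha>*(norm w)\<^sup>2) \<le> q" using tpos by (simp add: algebra_simps)
  have "t \<le> \<alpha>*N/(\<bar>e \<bullet> w\<bar>+1)" unfolding t_def by simp
  hence "t*(\<bar>e \<bullet> w\<bar>+1) \<le> \<alpha>*N" using d2 by (simp add: le_divide_eq)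
  hence t2: "t*\<bar>e \<bullet> w\<bar> \<le> \<alpha>*N" using tpos by (simp add: algebra_simps)
  have ex: "e \<bullet> (x + t *\<^sub>R w) = \<alpha>*N + t*(e \<bullet> w)"
    using bd N_def by (simp add: inner_add_right)
  have nonneg: "\<alpha>*N + t*(e \<bullet> w) \<ge> 0"
  proof -
    have "- (t*(e \<bullet> w)) \<le> t*\<bar>e \<bullet> w\<bar>" using tpos
      by (metis abs_ge_minus_self abs_mult abs_of_pos minus_mult_right)
    thus ?thesis using t2 by linarith
  qed
  have nx: "(norm (x + t *\<^sub>R w))\<^sup>2 = N\<^sup>2 + 2*t*(x \<bullet> w) + t\<^sup>2*(norm w)\<^sup>2"
    unfolding N_def power2_norm_eq_inner
    by (simp add: inner_add_left inner_add_right inner_commute power2_eq_square algebra_simps)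
  have key: "(\<alpha> * norm (x + t *\<^sub>R w))\<^sup>2 \<le> (\<alpha>*N + t*(e \<bullet> w))\<^sup>2"
  proof -
    have "(\<alpha>*N + t*(e \<bullet> w))\<^sup>2 - (\<alpha> * norm (x + t *\<^sub>R w))\<^sup>2
        = 2*t*\<alpha>*q + t\<^sup>2*(e \<bullet> w)\<^sup>2 - t*\<alpha>*(t*(\<alpha>*(norm w)\<^sup>2))"
      unfolding power_mult_distrib nx q_def by (simp add: power2_eq_square algebra_simps)
    also have "\<dots> \<ge> 2*t*\<alpha>*q - t*\<alpha>*q"
    proof -
      have "t*\<alpha>*(t*(\<alpha>*(norm w)\<^sup>2)) \<le> t*\<alpha>*q" using t1 tpos a by simp
      moreover have "t\<^sup>2*(e \<bullet> w)\<^sup>2 \<ge> 0" by simp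
      ultimately show ?thesis by linarith
    qed
    finally have "2*t*\<alpha>*q - t*\<alpha>*q \<le> (\<alpha>*N + t*(e \<bullet> w))\<^sup>2 - (\<alpha> * norm (x + t *\<^sub>R w))\<^sup>2" .
    moreover have "t*\<alpha>*q > 0" using tpos a qpos by simp
    ultimately show ?thesis by linarith
  qed
  have "\<alpha> * norm (x + t *\<^sub>R w) \<le> \<alpha>*N + t*(e \<bullet> w)"
    using power2_le_imp_le[OF key nonneg] .
  thus ?thesis using tpos ex unfolding cone_K_def by auto
qed

lemma int_lemma:
  fixes e x v :: "'a::real_inner" and \<alpha> :: real
  assumes a: "\<alpha> \<ge> 0" and g: "e \<bullet> x > \<alpha> * norm x"
  shows "\<exists>t>0. x + t *\<^sub>R v \<in> cone_K e \<alpha>"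
proof -
  define g where "g = e \<bullet> x - \<alpha> * norm x"
  have gp: "g > 0" using g g_def by simp
  define t where "t = g / (\<alpha> * norm v + \<bar>e \<bullet> v\<bar> + 1)"
  have dp: "\<alpha> * norm v + \<bar>e \<bullet> v\<bar> + 1 > 0" using a by (simp add: add_nonneg_pos)
  have tp: "t > 0" unfolding t_def using gp dp by simp
  have "t * (\<alpha> * norm v + \<bar>e \<bullet> v\<bar> + 1) = g" unfolding t_def using dp by simp
  hence tb: "t * (\<alpha> * norm v) + t * \<bar>e \<bullet> v\<bar> \<le> g" using tp by (simp add: algebra_simps)
  have "\<alpha> * norm (x + t *\<^sub>R v) \<le> \<alpha> * (norm x + t * norm v)"
    using a norm_triangle_ineq[of x "t *\<^sub>R v"] tp by (simp add: mult_left_mono)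
  moreover have "- (t * (e \<bullet> v)) \<le> t * \<bar>e \<bullet> v\<bar>" using tp
      by (metis abs_ge_minus_self abs_mult abs_of_pos minus_mult_right)
  moreover have "e \<bullet> (x + t *\<^sub>R v) = e \<bullet> x + t * (e \<bullet> v)" by (simp add: inner_add_right)
  ultimately have "\<alpha> * norm (x + t *\<^sub>R v) \<le> e \<bullet> (x + t *\<^sub>R v)"
    using tb g_def by (simp add: algebra_simps)
  thus ?thesis using tp unfolding cone_K_def by auto
qed



lemma proj_facts:
  fixes e v :: "'a::real_inner"
  assumes n: "n > 0" "e \<bullet> e = n"
  shows "e \<bullet> (v - ((e \<bullet> v)/n) *\<^sub>R e) = 0"
    and "n * (norm (v - ((e \<bullet> v)/n) *\<^sub>R e))\<^sup>2 = n * (norm v)\<^sup>2 - (e \<bullet> v)\<^sup>2"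
proof -
  show "e \<bullet> (v - ((e \<bullet> v)/n) *\<^sub>R e) = 0" using n by (simp add: inner_diff_right)
  define a where "a = e \<bullet> v"
  have "(norm (v - (a/n) *\<^sub>R e))\<^sup>2 = v \<bullet> v - 2*((a/n)*a) + (a/n)*(a/n) * n"
    unfolding power2_norm_eq_inner using n a_def
    by (simp add: inner_diff_left inner_diff_right inner_commute algebra_simps)
  also have "v \<bullet> v = (norm v)\<^sup>2" by (simp add: power2_norm_eq_inner)
  also have "(a/n)*(a/n) * n = a*a/n" using n by simp
  also have "(a/n)*a = a*a/n" by simp
  finally have "(norm (v - (a/n) *\<^sub>R e))\<^sup>2 = (norm v)\<^sup>2 - a*a/n" by simp
  hence "n * (norm (v - (a/n) *\<^sub>R e))\<^sup>2 = n * (norm v)\<^sup>2 - n * (a*a/n)"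
    by (simp add: right_diff_distrib)
  thus "n * (norm (v - ((e \<bullet> v)/n) *\<^sub>R e))\<^sup>2 = n * (norm v)\<^sup>2 - (e \<bullet> v)\<^sup>2"
    using n unfolding a_def by (simp add: power2_eq_square)
qed

lemma inner_split:
  fixes e s x :: "'a::real_inner"
  assumes n: "n > 0" "e \<bullet> e = n"
  shows "s \<bullet> x = (e \<bullet> s)*(e \<bullet> x)/n + (s - ((e \<bullet> s)/n) *\<^sub>R e) \<bullet> (x - ((e \<bullet> x)/n) *\<^sub>R e)"
  using n by (simp add: inner_diff_left inner_diff_right inner_commute field_simps)

lemma dual_bound:
  fixes e s :: "'a::real_inner"
  assumes n: "n > 0" "e \<bullet> e = n" and b: "0 < \<beta>" "\<beta>\<^sup>2 < n"
    and s: "s \<in> dual_cone (cone_K e \<beta>)"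
  shows "e \<bullet> s \<ge> sqrt (n - \<beta>\<^sup>2) * norm s"
    and "sqrt n * norm (s - ((e \<bullet> s)/n) *\<^sub>R e) \<le> \<beta> * norm s"
proof -
  define A where "A = e \<bullet> s"
  define sp where "sp = s - (A/n) *\<^sub>R e"
  define r where "r = norm sp"
  have esp: "e \<bullet> sp = 0" and nr: "n * r\<^sup>2 = n * (norm s)\<^sup>2 - A\<^sup>2"
    using proj_facts[OF n, of s] unfolding sp_def r_def A_def by auto
  have ne: "norm e = sqrt n" using n by (simp add: norm_eq_sqrt_inner)
  have "\<beta> < sqrt n" using b by (simp add: real_less_rsqrt)
  hence "\<beta> * sqrt n \<le> sqrt n * sqrt n" using n by (intro mult_right_mono) auto
  hence "\<beta> * norm e \<le> e \<bullet> e" using n ne by simp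
  hence "e \<in> cone_K e \<beta>" unfolding cone_K_def by simp
  hence A0: "A \<ge> 0" using s unfolding dual_cone_def A_def by auto
  define c where "c = sqrt (n * (n - \<beta>\<^sup>2))"
  have nb0: "n * (n - \<beta>\<^sup>2) \<ge> 0" using b n by simp
  have c0: "c \<ge> 0" unfolding c_def using nb0 by simp
  have cc: "c\<^sup>2 = n * (n - \<beta>\<^sup>2)" unfolding c_def using nb0 by simp
  define z where "z = (\<beta>*r) *\<^sub>R e - c *\<^sub>R sp"
  have ez: "e \<bullet> z = \<beta>*r*n" unfolding z_def using n esp by (simp add: inner_diff_right)
  have "(norm z)\<^sup>2 = (\<beta>*r)\<^sup>2 * n + c\<^sup>2 * r\<^sup>2"
    unfolding z_def power2_norm_eq_inner r_def using n esp
    by (simp add: inner_diff_left inner_diff_right inner_commute power2_eq_square algebra_simps)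
  also have "\<dots> = r\<^sup>2 * (\<beta>\<^sup>2 * n + c\<^sup>2)" by (simp add: power_mult_distrib algebra_simps)
  also have "\<beta>\<^sup>2 * n + c\<^sup>2 = n\<^sup>2" unfolding cc by (simp add: power2_eq_square algebra_simps)
  also have "r\<^sup>2 * n\<^sup>2 = (r*n)\<^sup>2" by (simp add: power_mult_distrib)
  finally have "(norm z)\<^sup>2 = (r*n)\<^sup>2" .
  moreover have "r*n \<ge> 0" using n r_def by simp
  ultimately have "norm z = r*n" using power2_eq_imp_eq norm_ge_zero by blast
  hence "z \<in> cone_K e \<beta>" unfolding cone_K_def using ez by (simp add: algebra_simps)
  hence zs: "z \<bullet> s \<ge> 0" using s unfolding dual_cone_def by auto
  have sps: "sp \<bullet> s = r\<^sup>2"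
  proof -
    have "sp \<bullet> s = sp \<bullet> (sp + (A/n) *\<^sub>R e)" unfolding sp_def by simp
    also have "\<dots> = r\<^sup>2" using esp unfolding r_def power2_norm_eq_inner
      by (simp add: inner_add_right inner_commute)
    finally show ?thesis .
  qed
  have "z \<bullet> s = r * (\<beta>*A - c*r)" unfolding z_def using sps A_def
    by (simp add: inner_diff_left power2_eq_square algebra_simps)
  hence key: "\<beta>*A \<ge> c*r"
  proof (cases "r > 0")
    case True
    thus ?thesis using zs \<open>z \<bullet> s = _\<close> by (simp add: zero_le_mult_iff)
  next
    case False
    hence "r = 0" using r_def by simp
    thus ?thesis using A0 b by simp
  qed
  have "(c*r)\<^sup>2 \<le> (\<beta>*A)\<^sup>2" using key c0 r_def
    by (simp add: power_mono)
  hence k2: "n * (n - \<beta>\<^sup>2) * r\<^sup>2 \<le> \<beta>\<^sup>2 * A\<^sup>2" using cc by (simp add: power_mult_distrib)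
  have "n * ((n - \<beta>\<^sup>2) * (norm s)\<^sup>2) \<le> n * A\<^sup>2"
  proof -
    have "n * (n - \<beta>\<^sup>2) * r\<^sup>2 = (n - \<beta>\<^sup>2) * (n * r\<^sup>2)" by (simp add: algebra_simps)
    also have "\<dots> = (n - \<beta>\<^sup>2) * (n * (norm s)\<^sup>2 - A\<^sup>2)" using nr by simp
    also have "\<dots> = n * ((n - \<beta>\<^sup>2) * (norm s)\<^sup>2) - (n - \<beta>\<^sup>2) * A\<^sup>2" by (simp add: algebra_simps)
    finally have e1: "n * (n - \<beta>\<^sup>2) * r\<^sup>2 = n * ((n - \<beta>\<^sup>2) * (norm s)\<^sup>2) - (n - \<beta>\<^sup>2) * A\<^sup>2" .
    have e2: "(n - \<beta>\<^sup>2) * A\<^sup>2 + \<beta>\<^sup>2 * A\<^sup>2 = n * A\<^sup>2" by (simp add: algebra_simps)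
    show ?thesis using k2 e1 e2 by linarith
  qed
  hence sq1: "(n - \<beta>\<^sup>2) * (norm s)\<^sup>2 \<le> A\<^sup>2" using n by simp
  have "sqrt ((n - \<beta>\<^sup>2) * (norm s)\<^sup>2) \<le> sqrt (A\<^sup>2)" using sq1 by (rule real_sqrt_le_mono)
  thus "e \<bullet> s \<ge> sqrt (n - \<beta>\<^sup>2) * norm s" using A0 unfolding A_def by (simp add: real_sqrt_mult)
  have "(n - \<beta>\<^sup>2) * (norm s)\<^sup>2 = n * (norm s)\<^sup>2 - \<beta>\<^sup>2 * (norm s)\<^sup>2" by (simp add: algebra_simps)
  hence "n * r\<^sup>2 \<le> \<beta>\<^sup>2 * (norm s)\<^sup>2" using nr sq1 by linarith
  hence "sqrt (n * r\<^sup>2) \<le> sqrt (\<beta>\<^sup>2 * (norm s)\<^sup>2)" by (rule real_sqrt_le_mono)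
  thus "sqrt n * norm (s - ((e \<bullet> s)/n) *\<^sub>R e) \<le> \<beta> * norm s"
    using b r_def unfolding sp_def A_def by (simp add: real_sqrt_mult)
qed

lemma cone_bound:
  fixes e x :: "'a::real_inner"
  assumes n: "n > 0" "e \<bullet> e = n" and a: "0 \<le> \<alpha>" "\<alpha>\<^sup>2 < n"
    and x: "e \<bullet> x \<ge> \<alpha> * norm x"
  shows "sqrt n * norm (x - ((e \<bullet> x)/n) *\<^sub>R e) \<le> sqrt (n - \<alpha>\<^sup>2) * norm x"
proof -
  define B where "B = e \<bullet> x"
  have nr: "n * (norm (x - (B/n) *\<^sub>R e))\<^sup>2 = n * (norm x)\<^sup>2 - B\<^sup>2"
    using proj_facts[OF n, of x] unfolding B_def by auto
  have "(\<alpha> * norm x)\<^sup>2 \<le> B\<^sup>2" using x a unfolding B_def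
    by (simp add: power_mono)
  hence "n * (norm (x - (B/n) *\<^sub>R e))\<^sup>2 \<le> (n - \<alpha>\<^sup>2) * (norm x)\<^sup>2" using nr
    by (simp add: power_mult_distrib algebra_simps)
  hence "sqrt (n * (norm (x - (B/n) *\<^sub>R e))\<^sup>2) \<le> sqrt ((n - \<alpha>\<^sup>2) * (norm x)\<^sup>2)"
    by (rule real_sqrt_le_mono)
  thus ?thesis unfolding B_def by (simp add: real_sqrt_mult)
qed

lemma sx_bound:
  fixes e s x :: "'a::real_inner"
  assumes n: "n > 0" "e \<bullet> e = n" and b: "0 < \<beta>" "\<beta> \<le> \<alpha>" "\<alpha>\<^sup>2 < n"
    and s: "s \<in> dual_cone (cone_K e \<beta>)" and x: "e \<bullet> x \<ge> \<alpha> * norm x"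
  shows "norm x * norm s * ((\<alpha> * sqrt (n - \<beta>\<^sup>2) - \<beta> * sqrt (n - \<alpha>\<^sup>2)) / n) \<le> s \<bullet> x"
proof -
  have "\<beta>\<^sup>2 \<le> \<alpha>\<^sup>2" using b by (intro power_mono) auto
  hence b2: "\<beta>\<^sup>2 < n" using b by linarith
  have a0: "\<alpha> \<ge> 0" using b by simp
  note d1 = dual_bound(1)[OF n b(1) b2 s] and d2 = dual_bound(2)[OF n b(1) b2 s]
  note c1 = cone_bound[OF n a0 b(3) x]
  define sp where "sp = s - ((e \<bullet> s)/n) *\<^sub>R e"
  define xp where "xp = x - ((e \<bullet> x)/n) *\<^sub>R e"
  have split: "s \<bullet> x = (e \<bullet> s)*(e \<bullet> x)/n + sp \<bullet> xp"
    using inner_split[OF n] unfolding sp_def xp_def by blast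
  have cs: "- (norm sp * norm xp) \<le> sp \<bullet> xp"
    using norm_cauchy_schwarz[of "-sp" xp] by simp
  have m1: "(sqrt (n - \<beta>\<^sup>2) * norm s) * (\<alpha> * norm x) \<le> (e \<bullet> s) * (e \<bullet> x)"
  proof (rule mult_mono[OF d1 x])
    have "0 \<le> sqrt (n - \<beta>\<^sup>2) * norm s" using b2 by simp
    thus "0 \<le> e \<bullet> s" using d1 by linarith
  qed (use a0 b2 in auto)
  have m2: "(sqrt n * norm sp) * (sqrt n * norm xp) \<le> (\<beta> * norm s) * (sqrt (n - \<alpha>\<^sup>2) * norm x)"
    by (rule mult_mono) (use d2 c1 b n in \<open>auto simp: sp_def xp_def\<close>)
  have sn: "sqrt n * sqrt n = n" using n by simp
  have "n * (s \<bullet> x) = (e \<bullet> s)*(e \<bullet> x) + n * (sp \<bullet> xp)" using split n by (simp add: field_simps)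
  also have "\<dots> \<ge> (e \<bullet> s)*(e \<bullet> x) - (sqrt n * norm sp) * (sqrt n * norm xp)"
  proof -
    have "n * (- (norm sp * norm xp)) \<le> n * (sp \<bullet> xp)" using mult_left_mono[OF cs, of n] n by simp
    moreover have "(sqrt n * norm sp) * (sqrt n * norm xp) = n * (norm sp * norm xp)"
    proof -
      have "(sqrt n * norm sp) * (sqrt n * norm xp) = (sqrt n * sqrt n) * (norm sp * norm xp)"
        by (simp only: mult_ac)
      thus ?thesis by (simp only: sn)
    qed
    ultimately show ?thesis by linarith
  qed
  finally have calc: "(e \<bullet> s)*(e \<bullet> x) - (sqrt n * norm sp) * (sqrt n * norm xp) \<le> n * (s \<bullet> x)" .
  have "n * (s \<bullet> x) \<ge> norm x * norm s * (\<alpha> * sqrt (n - \<beta>\<^sup>2) - \<beta> * sqrt (n - \<alpha>\<^sup>2))"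
  proof -
    have "norm x * norm s * (\<alpha> * sqrt (n - \<beta>\<^sup>2) - \<beta> * sqrt (n - \<alpha>\<^sup>2))
      = (sqrt (n - \<beta>\<^sup>2) * norm s) * (\<alpha> * norm x) - (\<beta> * norm s) * (sqrt (n - \<alpha>\<^sup>2) * norm x)"
      by (simp add: right_diff_distrib mult_ac)
    thus ?thesis using m1 m2 calc by linarith
  qed
  hence "norm x * norm s * (\<alpha> * sqrt (n - \<beta>\<^sup>2) - \<beta> * sqrt (n - \<alpha>\<^sup>2)) \<le> (s \<bullet> x) * n"
    by (metis mult.commute)
  hence "norm x * norm s * (\<alpha> * sqrt (n - \<beta>\<^sup>2) - \<beta> * sqrt (n - \<alpha>\<^sup>2)) / n \<le> s \<bullet> x"
    using n by (simp add: pos_divide_le_eq)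
  thus ?thesis by (metis times_divide_eq_right)
qed



lemma eps_lemma:
  fixes a \<sigma> :: real
  assumes "\<sigma> \<ge> 0" "\<And>\<epsilon>. \<epsilon> > 0 \<Longrightarrow> - (\<epsilon> * \<sigma>) \<le> a"
  shows "0 \<le> a"
proof (rule ccontr)
  assume "\<not> 0 \<le> a"
  hence a: "a < 0" by simp
  define \<epsilon> where "\<epsilon> = - a / (\<sigma> + 1)"
  have sp: "\<sigma> + 1 > 0" using assms(1) by simp
  have ep: "\<epsilon> > 0" unfolding \<epsilon>_def using a sp by (simp add: divide_neg_pos)
  have "- (\<epsilon> * \<sigma>) \<le> a" using assms(2)[OF ep] .
  hence "- (\<epsilon> * \<sigma>) * (\<sigma> + 1) \<le> a * (\<sigma> + 1)" using sp by (intro mult_right_mono) auto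
  moreover have "\<epsilon> * (\<sigma> + 1) = - a" unfolding \<epsilon>_def using sp by simp
  moreover have "- (\<epsilon> * \<sigma>) * (\<sigma> + 1) = \<sigma> * (- (\<epsilon> * (\<sigma> + 1)))" by (simp add: algebra_simps)
  ultimately have "\<sigma> * a \<le> a * (\<sigma> + 1)" by simp
  hence "0 \<le> a" by (simp add: algebra_simps)
  thus False using a by simp
qed

theorem proposition5p1:
  fixes e s x :: "real ^ 'n" and L :: "(real ^ 'n) set" and \<alpha> \<beta> :: real
  assumes he: "norm e = sqrt (real CARD('n))"
    and hb: "0 < \<beta>" and hba: "\<beta> \<le> \<alpha>" and ha: "\<alpha> < sqrt (real CARD('n))"
    and hs: "s \<in> interior (dual_cone (cone_K e \<beta>))"
    and hL: "subspace L" and heL: "e \<notin> L" and hsL: "s \<notin> orth_compl L"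
    and hxfeas: "x \<in> (\<lambda>v. e + v) ` L" "x \<in> cone_K e \<alpha>"
    and hxopt: "\<And>y. y \<in> (\<lambda>v. e + v) ` L \<Longrightarrow> y \<in> cone_K e \<alpha> \<Longrightarrow> s \<bullet> x \<le> s \<bullet> y"
  shows "\<exists>s'. s' \<in> (\<lambda>w. s + w) ` orth_compl L \<and> s' \<in> dual_cone (cone_K e \<alpha>) \<and>
    e \<bullet> (s - s') \<ge>
      sqrt ((real CARD('n) - \<alpha>\<^sup>2) * (norm x)\<^sup>2 * (1 - (\<beta> / \<alpha>)\<^sup>2)
            / (real CARD('n) - \<alpha>\<^sup>2 + (norm x - \<alpha>)\<^sup>2 * (1 - (\<beta> / \<alpha>)\<^sup>2)))
      * ((1 / real CARD('n)) * (\<alpha> * sqrt (real CARD('n) - \<beta>\<^sup>2) - \<beta> * sqrt (real CARD('n) - \<alpha>\<^sup>2)))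
      * norm s"
proof -
  define n where "n = real CARD('n)"
  have n0: "n > 0" unfolding n_def by simp
  have ee: "e \<bullet> e = n" using he n0 unfolding n_def
    by (metis of_nat_0_le_iff power2_norm_eq_inner real_sqrt_pow2)
  have a0: "\<alpha> > 0" using hb hba by simp
  have "\<alpha>\<^sup>2 < (sqrt n)\<^sup>2" using ha a0 unfolding n_def by (intro power_strict_mono) auto
  hence a2: "\<alpha>\<^sup>2 < n" using n0 by simp
  obtain v0 where v0: "v0 \<in> L" and xv0: "x = e + v0" using hxfeas(1) by auto
  have x0: "x \<noteq> 0"
  proof
    assume "x = 0"
    hence "e = - v0" using xv0 by (simp add: eq_neg_iff_add_eq_0)
    thus False using heL v0 hL by (simp add: subspace_neg)
  qed
  define N where "N = norm x"
  have Npos: "N > 0" using x0 N_def by simp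
  have xK: "e \<bullet> x \<ge> \<alpha> * N" using hxfeas(2) unfolding cone_K_def N_def by simp
  have sdual: "s \<in> dual_cone (cone_K e \<beta>)" using hs interior_subset by blast
  have feas: "x + t *\<^sub>R v \<in> (\<lambda>v. e + v) ` L" if "v \<in> L" for t v
  proof -
    have "v0 + t *\<^sub>R v \<in> L" using hL v0 that by (simp add: subspace_add subspace_mul)
    moreover have "x + t *\<^sub>R v = e + (v0 + t *\<^sub>R v)" using xv0 by simp
    ultimately show ?thesis by blast
  qed
  have step: "s \<bullet> v \<ge> 0" if "v \<in> L" "t > 0" "x + t *\<^sub>R v \<in> cone_K e \<alpha>" for v t
  proof -
    have "s \<bullet> x \<le> s \<bullet> (x + t *\<^sub>R v)" using hxopt feas[OF that(1)] that(3) by blast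
    hence "0 \<le> t * (s \<bullet> v)" by (simp add: inner_add_right)
    thus ?thesis using that(2) by (simp add: zero_le_mult_iff)
  qed
  have bd: "e \<bullet> x = \<alpha> * N"
  proof (rule ccontr)
    assume "e \<bullet> x \<noteq> \<alpha> * N"
    hence gt: "e \<bullet> x > \<alpha> * norm x" using xK N_def by simp
    have pos: "s \<bullet> v \<ge> 0" if "v \<in> L" for v
    proof -
      obtain t where "t > 0" "x + t *\<^sub>R v \<in> cone_K e \<alpha>"
        using int_lemma[OF less_imp_le[OF a0] gt, of v] by auto
      thus ?thesis using step \<open>v \<in> L\<close> by blast
    qed
    have "s \<in> orth_compl L" unfolding orth_compl_def
    proof (intro CollectI ballI)
      fix v assume v: "v \<in> L"
      have "s \<bullet> v \<ge> 0" using pos v by blast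
      moreover have "- v \<in> L" using v hL by (simp add: subspace_neg)
      hence "s \<bullet> (- v) \<ge> 0" using pos by blast
      ultimately show "v \<bullet> s = 0" by (simp add: inner_commute)
    qed
    thus False using hsL by simp
  qed
  define y where "y = N *\<^sub>R e - \<alpha> *\<^sub>R x"
  have dir: "s \<bullet> w \<ge> 0" if wL: "w \<in> L" and yw: "y \<bullet> w > 0" for w
  proof -
    obtain t where "t > 0" "x + t *\<^sub>R w \<in> cone_K e \<alpha>"
      using dir_lemma[OF a0, of x e w] Npos bd yw unfolding y_def N_def by auto
    thus ?thesis using step wL by blast
  qed
  define D where "D = N * (n - \<alpha>\<^sup>2)"
  have Dpos: "D > 0" unfolding D_def using Npos a2 by simp
  have yx: "y \<bullet> x = 0" unfolding y_def using bd N_def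
    by (simp add: inner_diff_left power2_norm_eq_inner[symmetric] power2_eq_square)
  have ye: "y \<bullet> e = D" unfolding y_def D_def using bd ee
    by (simp add: inner_diff_left inner_commute power2_eq_square algebra_simps)
  have yv0: "y \<bullet> v0 = - D"
  proof -
    have "v0 = x - e" using xv0 by simp
    thus ?thesis using yx ye by (simp add: inner_diff_right)
  qed
  have eK: "e \<in> cone_K e \<alpha>"
  proof -
    have "\<alpha> * sqrt n \<le> sqrt n * sqrt n" using ha a0 n0 unfolding n_def
      by (intro mult_right_mono) auto
    thus ?thesis unfolding cone_K_def using he ee n0 unfolding n_def by simp
  qed
  have "e \<in> (\<lambda>v. e + v) ` L" using hL by (force simp: subspace_0)
  hence "s \<bullet> x \<le> s \<bullet> e" using hxopt eK by blast
  hence sv0: "s \<bullet> v0 \<le> 0" using xv0 by (simp add: inner_add_right)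
  define lam where "lam = - (s \<bullet> v0) / D"
  have lam0: "lam \<ge> 0" unfolding lam_def using sv0 Dpos by (simp add: divide_nonpos_pos)
  have claim: "s \<bullet> v = lam * (y \<bullet> v)" if v: "v \<in> L" for v
  proof -
    define v' where "v' = v + ((y \<bullet> v) / D) *\<^sub>R v0"
    have v'L: "v' \<in> L" unfolding v'_def using hL v v0 by (simp add: subspace_add subspace_mul)
    have yv': "y \<bullet> v' = 0" unfolding v'_def using yv0 Dpos by (simp add: inner_add_right)
    have gen: "c * (s \<bullet> v') \<ge> - (\<epsilon> * (- (s \<bullet> v0)))" if c: "c = 1 \<or> c = -1" and ep: "\<epsilon> > 0" for c \<epsilon>
    proof -
      have wL: "c *\<^sub>R v' - \<epsilon> *\<^sub>R v0 \<in> L" using hL v'L v0 by (simp add: subspace_diff subspace_mul)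
      have "y \<bullet> (c *\<^sub>R v' - \<epsilon> *\<^sub>R v0) = \<epsilon> * D" using yv' yv0 by (simp add: inner_diff_right)
      hence "y \<bullet> (c *\<^sub>R v' - \<epsilon> *\<^sub>R v0) > 0" using ep Dpos by simp
      hence "s \<bullet> (c *\<^sub>R v' - \<epsilon> *\<^sub>R v0) \<ge> 0" using dir wL by blast
      thus ?thesis by (simp add: inner_diff_right)
    qed
    have "0 \<le> s \<bullet> v'"
    proof (rule eps_lemma[of "- (s \<bullet> v0)"])
      show "0 \<le> - (s \<bullet> v0)" using sv0 by simp
      fix \<epsilon> :: real assume "\<epsilon> > 0"
      thus "- (\<epsilon> * (- (s \<bullet> v0))) \<le> s \<bullet> v'" using gen[of 1 \<epsilon>] by simp
    qed
    moreover have "0 \<le> - (s \<bullet> v')"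
    proof (rule eps_lemma[of "- (s \<bullet> v0)"])
      show "0 \<le> - (s \<bullet> v0)" using sv0 by simp
      fix \<epsilon> :: real assume "\<epsilon> > 0"
      thus "- (\<epsilon> * (- (s \<bullet> v0))) \<le> - (s \<bullet> v')" using gen[of "-1" \<epsilon>] by simp
    qed
    ultimately have sv': "s \<bullet> v' = 0" by simp
    have "s \<bullet> v = s \<bullet> v' - ((y \<bullet> v) / D) * (s \<bullet> v0)" unfolding v'_def by (simp add: inner_add_right)
    also have "\<dots> = lam * (y \<bullet> v)" using sv' unfolding lam_def by simp
    finally show ?thesis .
  qed
  define s' where "s' = lam *\<^sub>R y"
  have s'orth: "s' - s \<in> orth_compl L" unfolding orth_compl_def
  proof (intro CollectI ballI)
    fix v assume "v \<in> L"
    hence c: "s \<bullet> v = lam * (y \<bullet> v)" using claim by blast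
    have "v \<bullet> (s' - s) = lam * (v \<bullet> y) - v \<bullet> s" unfolding s'_def by (simp add: inner_diff_right)
    also have "\<dots> = lam * (y \<bullet> v) - s \<bullet> v" by (simp only: inner_commute)
    finally show "v \<bullet> (s' - s) = 0" using c by simp
  qed
  have s'img: "s' \<in> (\<lambda>w. s + w) ` orth_compl L"
    using s'orth by (metis (no_types, lifting) add_diff_cancel_left' add.commute diff_add_cancel image_eqI)
  have s'dual: "s' \<in> dual_cone (cone_K e \<alpha>)" unfolding dual_cone_def
  proof (intro CollectI ballI)
    fix z assume "z \<in> cone_K e \<alpha>"
    hence ez: "e \<bullet> z \<ge> \<alpha> * norm z" unfolding cone_K_def by simp
    have "N * (\<alpha> * norm z) \<le> N * (e \<bullet> z)" using ez Npos by (simp add: mult_left_mono)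
    moreover have "\<alpha> * (z \<bullet> x) \<le> \<alpha> * (norm z * N)" using a0 norm_cauchy_schwarz[of z x] N_def
      by (simp add: mult_left_mono)
    moreover have "z \<bullet> y = N * (z \<bullet> e) - \<alpha> * (z \<bullet> x)" unfolding y_def by (simp add: inner_diff_right)
    moreover have "N * (z \<bullet> e) = N * (e \<bullet> z)" by (metis inner_commute)
    moreover have "\<alpha> * (norm z * N) = N * (\<alpha> * norm z)" by simp
    ultimately have "z \<bullet> y \<ge> 0" by linarith
    thus "z \<bullet> s' \<ge> 0" unfolding s'_def using lam0 by simp
  qed
  have es: "e \<bullet> (s - s') = s \<bullet> x"
  proof -
    have "s \<bullet> v0 = lam * (y \<bullet> v0)" using claim v0 by blast
    hence "v0 \<bullet> (s - s') = 0" unfolding s'_def by (simp add: inner_diff_right inner_commute)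
    hence "x \<bullet> (s - s') = e \<bullet> (s - s')" using xv0 by (simp add: inner_add_left)
    moreover have "x \<bullet> (s - s') = s \<bullet> x" unfolding s'_def using yx
      by (simp add: inner_diff_right inner_commute)
    ultimately show ?thesis by simp
  qed
  define X where "X = \<alpha> * sqrt (n - \<beta>\<^sup>2) - \<beta> * sqrt (n - \<alpha>\<^sup>2)"
  have sxb: "N * norm s * (X / n) \<le> s \<bullet> x"
    using sx_bound[OF n0 ee hb hba a2 sdual] xK unfolding X_def N_def by simp
  have X0: "X \<ge> 0"
  proof -
    have "\<beta>\<^sup>2 \<le> \<alpha>\<^sup>2" using hb hba by (intro power_mono) auto
    hence "sqrt (n - \<alpha>\<^sup>2) \<le> sqrt (n - \<beta>\<^sup>2)" by simp
    hence "\<beta> * sqrt (n - \<alpha>\<^sup>2) \<le> \<alpha> * sqrt (n - \<beta>\<^sup>2)" using hb hba a2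
      by (intro mult_mono) auto
    thus ?thesis unfolding X_def by simp
  qed
  define r2 where "r2 = 1 - (\<beta> / \<alpha>)\<^sup>2"
  have r2: "0 \<le> r2" "r2 \<le> 1"
  proof -
    have "\<beta> / \<alpha> \<le> 1" using hba a0 by simp
    moreover have "\<beta> / \<alpha> \<ge> 0" using hb a0 by simp
    ultimately have "(\<beta> / \<alpha>)\<^sup>2 \<le> 1" by (simp add: power_le_one)
    thus "0 \<le> r2" unfolding r2_def by simp
    show "r2 \<le> 1" unfolding r2_def by simp
  qed
  have C1: "sqrt ((n - \<alpha>\<^sup>2) * N\<^sup>2 * r2 / (n - \<alpha>\<^sup>2 + (N - \<alpha>)\<^sup>2 * r2)) \<le> N"
  proof -
    define Dd where "Dd = n - \<alpha>\<^sup>2 + (N - \<alpha>)\<^sup>2 * r2"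
    have "(N - \<alpha>)\<^sup>2 * r2 \<ge> 0" using r2 by simp
    hence Ddge: "Dd \<ge> n - \<alpha>\<^sup>2" unfolding Dd_def by simp
    hence Ddpos: "Dd > 0" using a2 by simp
    have "(n - \<alpha>\<^sup>2) * r2 \<le> (n - \<alpha>\<^sup>2) * 1" using r2 a2 by (intro mult_left_mono) auto
    hence "(n - \<alpha>\<^sup>2) * r2 \<le> Dd" using Ddge by simp
    hence "(n - \<alpha>\<^sup>2) * r2 * N\<^sup>2 \<le> Dd * N\<^sup>2" by (simp add: mult_right_mono)
    hence "(n - \<alpha>\<^sup>2) * N\<^sup>2 * r2 / Dd \<le> N\<^sup>2" using Ddpos
      by (simp add: pos_divide_le_eq mult_ac)
    hence "sqrt ((n - \<alpha>\<^sup>2) * N\<^sup>2 * r2 / Dd) \<le> sqrt (N\<^sup>2)" by (rule real_sqrt_le_mono)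
    thus ?thesis unfolding Dd_def using Npos by simp
  qed
  have fin: "sqrt ((n - \<alpha>\<^sup>2) * N\<^sup>2 * r2 / (n - \<alpha>\<^sup>2 + (N - \<alpha>)\<^sup>2 * r2)) * ((1/n) * X) * norm s
      \<le> N * ((1/n) * X) * norm s"
    using C1 X0 n0 by (intro mult_right_mono) auto
  also have "\<dots> = N * norm s * (X / n)" by simp
  also have "\<dots> \<le> e \<bullet> (s - s')" using sxb es by simp
  finally show ?thesis using s'img s'dual unfolding n_def N_def r2_def X_def by blast
qed

end
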